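(* Let $A=(a,\ ha+d,\ ha+3d,\ ha+5d,\ \dots,\ ha+(2k+1)d)$ where $\gcd(a,d)=1$, $a,h,d,k\in\mathbb{P}$, $a>2$, $3\le 2k+1\le a-1$. Write $a-1=(2k+1)s+t$ with $1\le t\le 2k+1$. If $t$ is even, then $$g(A)=ha\Big(\Big\lfloor\frac{a-2}{2k+1}\Big\rfloor+2\Big)+(a-1)d-a.$$ If $t$ is odd, then $$g(A)=\max\Big\{ha\Big(\Big\lfloor\frac{a-2}{2k+1}\Big\rfloor+1\Big)+(a-1)d-a,\ ha\Big(\Big\lfloor\frac{a-3}{2k+1}\Big\rfloor+2\Big)+(a-2)d-a\Big\}.$$ Furthermore, $$n(A)=hs\Big(ks+t+\frac12 s-\frac12\Big)+(a-1)\Big(\frac d2+h-\frac12\Big)+h\Big\lfloor\frac t2\Big\rfloor.$$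
   Context: For a tuple $A$ of positive integers with $\gcd(A)=1$, $\mathcal{NR}(A)$ is the finite set of nonnegative integers that cannot be written as a nonnegative integer combination of the entries of $A$; $g(A)=\max\mathcal{NR}(A)$ and $n(A)=|\mathcal{NR}(A)|$. $\mathbb{P}=\{1,2,\dots\}$. *)

theory Defs
  imports Complex_Main
begin

definition representable :: "nat list \<Rightarrow> nat \<Rightarrow> bool" where
  "representable A x \<longleftrightarrow>
     (\<exists>c :: nat list. length c = length A \<and> x = (\<Sum>i<length A. c ! i * A ! i))"

definition NR :: "nat list \<Rightarrow> nat set" where
  "NR A = {x. \<not> representable A x}"

definition frob_g :: "nat list \<Rightarrow> nat" where
  "frob_g A = Max (NR A)"

definition frob_n :: "nat list \<Rightarrow> nat" where
  "frob_n A = card (NR A)"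

end

theory Submission
  imports Defs "HOL-Number_Theory.Cong"
begin


definition FF :: "nat \<Rightarrow> nat \<Rightarrow> nat \<Rightarrow> bool" where
  "FF k m L \<longleftrightarrow> m \<le> L \<and> L \<le> (2*k+1)*m \<and> even (L+m)"

definition qq :: "nat \<Rightarrow> nat \<Rightarrow> nat" where
  "qq k L = (L + 2*k) div (2*k+1)"

definition mm :: "nat \<Rightarrow> nat \<Rightarrow> nat" where
  "mm k L = (if even (qq k L + L) then qq k L else qq k L + 1)"

lemma qq_le: "qq k L \<le> L"
proof -
  have "L + 2*k < (L+1) * (2*k+1)" by (simp add: algebra_simps)
  then have "(L + 2*k) div (2*k+1) < L+1" by (rule less_mult_imp_div_less)
  then show ?thesis unfolding qq_def by simp
qed

lemma qq_ge: "L \<le> (2*k+1) * qq k L"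
proof -
  have r: "(L + 2*k) mod (2*k+1) \<le> 2*k"
    using mod_less_divisor[of "2*k+1" "L+2*k"] by simp
  have "(2*k+1) * ((L + 2*k) div (2*k+1)) + (L + 2*k) mod (2*k+1) = L + 2*k"
    by (rule mult_div_mod_eq)
  then show ?thesis unfolding qq_def using r by linarith
qed

lemma qq_min: "L \<le> (2*k+1)*m \<Longrightarrow> qq k L \<le> m"
proof -
  assume "L \<le> (2*k+1)*m"
  then have "L + 2*k < (m+1) * (2*k+1)" by (simp add: algebra_simps)
  then have "(L + 2*k) div (2*k+1) < m+1" by (rule less_mult_imp_div_less)
  then show ?thesis unfolding qq_def by simp
qed

lemma qq_mono: "L \<le> L' \<Longrightarrow> qq k L \<le> qq k L'"
  unfolding qq_def by (simp add: div_le_mono)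

lemma qq_shift: "qq k (L + (2*k+1)) = qq k L + 1"
proof -
  have "L + (2*k+1) + 2*k = (L + 2*k) + (2*k+1)" by simp
  then show ?thesis unfolding qq_def by (simp only: div_add_self2)
qed

lemma mm_F: "FF k (mm k L) L"
proof -
  have a: "qq k L \<le> L" by (rule qq_le)
  have b: "L \<le> (2*k+1) * qq k L" by (rule qq_ge)
  show ?thesis
  proof (cases "even (qq k L + L)")
    case True then show ?thesis using a b by (simp add: FF_def mm_def add.commute)
  next
    case False
    then have "qq k L \<noteq> L" by auto
    then have "qq k L + 1 \<le> L" using a by simp
    moreover have "(2*k+1) * qq k L \<le> (2*k+1) * (qq k L + 1)" by simp
    ultimately show ?thesis using False b by (simp add: FF_def mm_def add.commute)
  qed
qed

lemma mm_le: "mm k L \<le> qq k L + 1"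
  by (simp add: mm_def)

lemma mm_min: "FF k m L \<Longrightarrow> mm k L \<le> m"
proof -
  assume F: "FF k m L"
  then have "qq k L \<le> m" using qq_min by (simp add: FF_def)
  then show ?thesis using F unfolding mm_def FF_def
    by (cases "qq k L = m") (auto simp: add.commute)
qed

lemma mm_shift: "FF k m L' \<Longrightarrow> L + (2*k+1) \<le> L' \<Longrightarrow> mm k L \<le> m"
proof -
  assume F: "FF k m L'" and le: "L + (2*k+1) \<le> L'"
  have "qq k L' \<le> m" using F qq_min by (simp add: FF_def)
  moreover have "qq k (L + (2*k+1)) \<le> qq k L'" by (rule qq_mono[OF le])
  moreover have "qq k (L + (2*k+1)) = qq k L + 1" by (rule qq_shift)
  ultimately show ?thesis using mm_le[of k L] by simp
qed

lemma mm_block: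
  assumes "1 \<le> r" "r \<le> 2*k+1"
  shows "mm k ((2*k+1)*b + r) = (if odd r then b+1 else b+2)"
proof -
  have q: "qq k ((2*k+1)*b + r) = b + 1"
  proof -
    have e: "(2*k+1)*b + r + 2*k = (r - 1) + (b+1)*(2*k+1)"
      using assms by (simp add: algebra_simps)
    have l: "r - 1 < 2*k+1" using assms by simp
    have "((r - 1) + (b+1)*(2*k+1)) div (2*k+1) = (b+1) + (r-1) div (2*k+1)"
      by (rule div_mult_self1) simp
    also have "(r-1) div (2*k+1) = 0" using l by simp
    finally show ?thesis unfolding qq_def e by simp
  qed
  have "even (b + 1 + ((2*k+1)*b + r)) \<longleftrightarrow> odd r"
  proof -
    have "b + 1 + ((2*k+1)*b + r) = 2*((k+1)*b) + (r+1)" by (simp add: algebra_simps)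
    then show ?thesis by simp
  qed
  then show ?thesis unfolding mm_def q by auto
qed

lemma mm_0: "mm k 0 = 0"
  by (simp add: mm_def qq_def)

lemma decomp: "FF k m L \<Longrightarrow> \<exists>g. (\<Sum>j<k+1. g j) = m \<and> (\<Sum>j<k+1. g j * (2*j+1)) = L"
proof (induction m arbitrary: L)
  case 0
  then have "L = 0" by (simp add: FF_def)
  then show ?case by (intro exI[of _ "\<lambda>_. 0"]) simp
next
  case (Suc m)
  then have F: "Suc m \<le> L" "L \<le> (2*k+1)*Suc m" "even (L + Suc m)" by (auto simp: FF_def)
  define oo where "oo = (if L - m \<le> 2*k+1 then L - m else 2*k+1)"
  have oodd: "odd oo" using F unfolding oo_def by (auto simp: even_add)
  have oge: "1 \<le> oo" "oo \<le> 2*k+1" using F unfolding oo_def by auto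
  define j where "j = (oo - 1) div 2"
  have oj: "oo = 2*j+1" using oodd oge unfolding j_def by presburger
  have jk: "j < k+1" using oge oj by simp
  have "FF k m (L - oo)"
    using F unfolding FF_def oo_def by (auto simp: algebra_simps even_add)
  then obtain g where g: "(\<Sum>j<k+1. g j) = m" "(\<Sum>j<k+1. g j * (2*j+1)) = L - oo"
    using Suc.IH by blast
  define g' where "g' = (\<lambda>i. g i + (if i = j then 1 else 0))"
  have "(\<Sum>i<k+1. g' i) = Suc m" unfolding g'_def using g jk by (simp add: sum.distrib)
  moreover have "(\<Sum>i<k+1. g' i * (2*i+1)) = L"
  proof -
    have sd: "(\<Sum>i<k+1. (if i = j then 2*i+1 else 0)) = oo"
      using jk oj by (simp add: sum.delta)
    have "(\<Sum>i<k+1. g' i * (2*i+1)) = (\<Sum>i<k+1. g i * (2*i+1) + (if i = j then 2*i+1 else 0))"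
      by (rule sum.cong) (auto simp: g'_def algebra_simps)
    also have "\<dots> = (\<Sum>i<k+1. g i * (2*i+1)) + (\<Sum>i<k+1. (if i = j then 2*i+1 else 0))"
      by (rule sum.distrib)
    also have "\<dots> = L - oo + oo" by (simp only: g(2) sd)
    also have "\<dots> = L" using oge F unfolding oo_def by auto
    finally show ?thesis .
  qed
  ultimately show ?case by blast
qed



lemma sum_expand:
  fixes a h d k :: nat and c :: "nat list"
  shows "(\<Sum>i<length (a # map (\<lambda>j. h*a + (2*j+1)*d) [0..<k+1]).
            c!i * (a # map (\<lambda>j. h*a + (2*j+1)*d) [0..<k+1])!i)
         = c!0*a + (\<Sum>i<k+1. c!(Suc i) * (h*a + (2*i+1)*d))"
proof -
  have l: "length (a # map (\<lambda>j. h*a + (2*j+1)*d) [0..<k+1]) = Suc (k+1)" by simp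
  show ?thesis unfolding l sum.lessThan_Suc_shift
    by (simp del: upt_Suc)
qed

lemma lin_sum:
  fixes f :: "nat \<Rightarrow> nat"
  shows "(\<Sum>i<k+1. f i * (h*a + (2*i+1)*d)) = (\<Sum>i<k+1. f i)*h*a + (\<Sum>i<k+1. f i*(2*i+1))*d"
proof -
  have "(\<Sum>i<k+1. f i * (h*a + (2*i+1)*d)) = (\<Sum>i<k+1. f i * (h*a) + (f i*(2*i+1))*d)"
    by (rule sum.cong) (auto simp: algebra_simps)
  also have "\<dots> = (\<Sum>i<k+1. f i * (h*a)) + (\<Sum>i<k+1. (f i*(2*i+1))*d)"
    by (rule sum.distrib)
  also have "\<dots> = (\<Sum>i<k+1. f i)*(h*a) + (\<Sum>i<k+1. f i*(2*i+1))*d"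
    by (simp only: sum_distrib_right)
  finally show ?thesis by (simp only: mult.assoc)
qed

lemma FF_of:
  fixes f :: "nat \<Rightarrow> nat"
  shows "FF k (\<Sum>i<k+1. f i) (\<Sum>i<k+1. f i*(2*i+1))"
proof -
  have 1: "(\<Sum>i<k+1. f i) \<le> (\<Sum>i<k+1. f i*(2*i+1))"
    by (rule sum_mono) simp
  have "(\<Sum>i<k+1. f i*(2*i+1)) \<le> (\<Sum>i<k+1. f i*(2*k+1))"
    by (rule sum_mono) simp
  also have "\<dots> = (\<Sum>i<k+1. f i) * (2*k+1)"
    by (rule sum_distrib_right[symmetric])
  also have "\<dots> = (2*k+1) * (\<Sum>i<k+1. f i)"
    by (rule mult.commute)
  finally have 2: "(\<Sum>i<k+1. f i*(2*i+1)) \<le> (2*k+1) * (\<Sum>i<k+1. f i)" .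
  have "(\<Sum>i<k+1. f i*(2*i+1)) + (\<Sum>i<k+1. f i) = (\<Sum>i<k+1. f i*(2*i+1) + f i)"
    by (rule sum.distrib[symmetric])
  also have "\<dots> = (\<Sum>i<k+1. 2 * (f i * (i+1)))"
    by (rule sum.cong) (simp_all add: algebra_simps)
  also have "\<dots> = 2 * (\<Sum>i<k+1. f i * (i+1))" by (rule sum_distrib_left[symmetric])
  finally have e3: "(\<Sum>i<k+1. f i*(2*i+1)) + (\<Sum>i<k+1. f i) = 2 * (\<Sum>i<k+1. f i * (i+1))" .
  have 3: "even ((\<Sum>i<k+1. f i*(2*i+1)) + (\<Sum>i<k+1. f i))" unfolding e3 by (rule dvd_triv_left)
  show ?thesis using 1 2 3 unfolding FF_def by blast
qed

lemma rep_iff: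
  fixes a h d k x :: nat
  shows "representable (a # map (\<lambda>j. h*a + (2*j+1)*d) [0..<k+1]) x \<longleftrightarrow>
         (\<exists>c0 m L. FF k m L \<and> x = c0*a + m*h*a + L*d)"
proof
  assume "representable (a # map (\<lambda>j. h*a + (2*j+1)*d) [0..<k+1]) x"
  then obtain c where c: "x = (\<Sum>i<length (a # map (\<lambda>j. h*a + (2*j+1)*d) [0..<k+1]).
            c!i * (a # map (\<lambda>j. h*a + (2*j+1)*d) [0..<k+1])!i)"
    unfolding representable_def by blast
  then have "x = c!0*a + (\<Sum>i<k+1. c!(Suc i) * (h*a + (2*i+1)*d))"
    using sum_expand by simp
  also have "\<dots> = c!0*a + (\<Sum>i<k+1. c!(Suc i))*h*a + (\<Sum>i<k+1. c!(Suc i)*(2*i+1))*d"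
    by (simp only: lin_sum)
  finally show "\<exists>c0 m L. FF k m L \<and> x = c0*a + m*h*a + L*d"
    using FF_of[of k "\<lambda>i. c!(Suc i)"] by blast
next
  assume "\<exists>c0 m L. FF k m L \<and> x = c0*a + m*h*a + L*d"
  then obtain c0 m L where F: "FF k m L" and x: "x = c0*a + m*h*a + L*d" by blast
  obtain g where g: "(\<Sum>j<k+1. g j) = m" "(\<Sum>j<k+1. g j * (2*j+1)) = L"
    using decomp[OF F] by blast
  define c where "c = c0 # map g [0..<k+1]"
  have len: "length c = length (a # map (\<lambda>j. h*a + (2*j+1)*d) [0..<k+1])"
    unfolding c_def by simp
  have "(\<Sum>i<length (a # map (\<lambda>j. h*a + (2*j+1)*d) [0..<k+1]).
            c!i * (a # map (\<lambda>j. h*a + (2*j+1)*d) [0..<k+1])!i)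
        = c!0*a + (\<Sum>i<k+1. c!(Suc i) * (h*a + (2*i+1)*d))"
    by (rule sum_expand)
  also have "(\<Sum>i<k+1. c!(Suc i) * (h*a + (2*i+1)*d)) = (\<Sum>i<k+1. g i * (h*a + (2*i+1)*d))"
    by (rule sum.cong) (simp_all add: c_def del: upt_Suc)
  also have "\<dots> = m*h*a + L*d" by (simp only: lin_sum g)
  finally have "x = (\<Sum>i<length (a # map (\<lambda>j. h*a + (2*j+1)*d) [0..<k+1]).
            c!i * (a # map (\<lambda>j. h*a + (2*j+1)*d) [0..<k+1])!i)"
    using x by (simp add: c_def)
  then show "representable (a # map (\<lambda>j. h*a + (2*j+1)*d) [0..<k+1]) x"
    unfolding representable_def using len by blast
qed



lemma card_res:
  fixes a N :: nat
  assumes "0 < a"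
  shows "card {x. x mod a = N mod a \<and> x < N} = N div a"
proof -
  have "{x. x mod a = N mod a \<and> x < N} = (\<lambda>i. N mod a + a*i) ` {..<N div a}"
  proof (intro Set.set_eqI iffI)
    fix x assume x: "x \<in> {x. x mod a = N mod a \<and> x < N}"
    then have "x div a < N div a"
    proof -
      have "x = a * (x div a) + N mod a" using x mult_div_mod_eq[of a x] by simp
      moreover have "N = a * (N div a) + N mod a" by simp
      moreover have "x < N" using x by simp
      ultimately have "a * (x div a) < a * (N div a)" by linarith
      then show ?thesis by simp
    qed
    moreover have "x = N mod a + a * (x div a)" using x mult_div_mod_eq[of a x] by simp
    ultimately show "x \<in> (\<lambda>i. N mod a + a*i) ` {..<N div a}" by blast
  next
    fix x assume "x \<in> (\<lambda>i. N mod a + a*i) ` {..<N div a}"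
    then obtain i where i: "i < N div a" "x = N mod a + a*i" by blast
    have "a * Suc i \<le> a * (N div a)" using i(1) by (intro mult_le_mono2) simp
    then have "a * i + a \<le> a * (N div a)" by simp
    moreover have "N = a * (N div a) + N mod a" by simp
    moreover have "N mod a < a" using assms by simp
    ultimately have "x < N" using i(2) by linarith
    moreover have "x mod a = N mod a" using i(2) by simp
    ultimately show "x \<in> {x. x mod a = N mod a \<and> x < N}" by blast
  qed
  moreover have "inj_on (\<lambda>i. N mod a + a*i) {..<N div a}"
    using assms by (auto simp: inj_on_def)
  ultimately show ?thesis by (simp add: card_image)
qed

context
  fixes a h d k :: nat
  assumes cop: "coprime a d" and aK: "2*k+2 \<le> a"
begin

abbreviation AA where "AA \<equiv> a # map (\<lambda>j. h*a + (2*j+1)*d) [0..<k+1]"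
abbreviation ww where "ww L \<equiv> mm k L * h * a + L * d"

lemma apos: "0 < a" using aK by simp

lemma cancel: "L' * d mod a = L * d mod a \<Longrightarrow> L' mod a = L mod a"
proof -
  assume "L' * d mod a = L * d mod a"
  then have "[L' * d = L * d] (mod a)" by (simp add: cong_def)
  then have "[L' = L] (mod a)" using cong_mult_rcancel_nat[of d a L' L] cop
    by (simp add: coprime_commute)
  then show ?thesis by (simp add: cong_def)
qed

lemma ww_mod: "ww L mod a = L * d mod a"
  by simp

lemma key:
  assumes L: "L < a" and xm: "x mod a = L * d mod a"
  shows "representable AA x \<longleftrightarrow> ww L \<le> x"
proof
  assume "representable AA x"
  then obtain c0 m L' where F: "FF k m L'" and x: "x = c0*a + m*h*a + L'*d"
    using rep_iff by blast
  have "x mod a = L' * d mod a" unfolding x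
  proof -
    have "c0*a + m*h*a + L'*d = L'*d + (c0 + m*h)*a" by (simp add: algebra_simps)
    then show "(c0*a + m*h*a + L'*d) mod a = L' * d mod a" by (simp only: mod_mult_self1)
  qed
  then have "L' * d mod a = L * d mod a" using xm by simp
  then have "L' mod a = L mod a" by (rule cancel)
  then have "L' mod a = L" using L by simp
  then have LL: "L' = a * (L' div a) + L" using mult_div_mod_eq[of a L'] by simp
  have mle: "mm k L \<le> m \<and> L \<le> L'"
  proof (cases "L' div a = 0")
    case True
    then have "L' = L" using LL by simp
    then show ?thesis using mm_min F by simp
  next
    case False
    then have "a \<le> a * (L' div a)" by simp
    then have "L + (2*k+1) \<le> L'" using LL aK by linarith
    then show ?thesis using mm_shift F by simp
  qed
  then have "mm k L * h * a \<le> m * h * a" "L * d \<le> L' * d" by simp_all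
  then show "ww L \<le> x" unfolding x by linarith
next
  assume le: "ww L \<le> x"
  have "x mod a = ww L mod a" using xm by simp
  then have "a dvd x - ww L" using mod_eq_dvd_iff_nat[OF le] by blast
  then obtain c where c: "x - ww L = a * c" by blast
  have "x = c*a + mm k L * h * a + L*d" using c le by (simp add: algebra_simps)
  then show "representable AA x" using rep_iff mm_F by blast
qed

lemma inj_res: "inj_on (\<lambda>L. L * d mod a) {..<a}"
proof (rule inj_onI)
  fix x y assume xy: "x \<in> {..<a}" "y \<in> {..<a}" "x * d mod a = y * d mod a"
  from xy(3) have "x mod a = y mod a" by (rule cancel)
  then show "x = y" using xy(1,2) by simp
qed

lemma surj_res: "\<exists>L<a. L * d mod a = x mod a"
proof -
  have "inj_on (\<lambda>L. L * d mod a) {..<a}" by (rule inj_res)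
  moreover have "(\<lambda>L. L * d mod a) ` {..<a} \<subseteq> {..<a}" using apos by auto
  ultimately have "(\<lambda>L. L * d mod a) ` {..<a} = {..<a}" by (simp add: endo_inj_surj)
  moreover have "x mod a \<in> {..<a}" using apos by simp
  ultimately have "x mod a \<in> (\<lambda>L. L * d mod a) ` {..<a}" by simp
  then obtain L where "L < a" "x mod a = L * d mod a" by auto
  then show ?thesis by auto
qed

lemma bij_res: "bij_betw (\<lambda>L. L * d mod a) {..<a} {..<a}"
proof -
  have "inj_on (\<lambda>L. L * d mod a) {..<a}" by (rule inj_res)
  moreover have "(\<lambda>L. L * d mod a) ` {..<a} \<subseteq> {..<a}" using apos by auto
  ultimately have "(\<lambda>L. L * d mod a) ` {..<a} = {..<a}" by (simp add: endo_inj_surj)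
  then show ?thesis using \<open>inj_on _ _\<close> by (simp add: bij_betw_def)
qed

definition SS where "SS L = {x. x mod a = ww L mod a \<and> x < ww L}"

lemma NR_eq: "NR AA = (\<Union>L\<in>{..<a}. SS L)"
proof (intro Set.set_eqI iffI)
  fix x assume "x \<in> NR AA"
  then have nr: "\<not> representable AA x" by (simp add: NR_def)
  obtain L where L: "L < a" "L * d mod a = x mod a" using surj_res by blast
  then have "x < ww L" using key[of L x] nr by simp
  moreover have "x mod a = ww L mod a" using L(2) ww_mod[of L] by simp
  ultimately have "x \<in> SS L" unfolding SS_def by simp
  then show "x \<in> (\<Union>L\<in>{..<a}. SS L)" using L(1) by blast
next
  fix x assume "x \<in> (\<Union>L\<in>{..<a}. SS L)"
  then obtain L where L: "L < a" "x mod a = ww L mod a" "x < ww L" unfolding SS_def by auto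
  then have "\<not> representable AA x" using key[of L x] by simp
  then show "x \<in> NR AA" by (simp add: NR_def)
qed

lemma SS_disj: "L1 < a \<Longrightarrow> L2 < a \<Longrightarrow> L1 \<noteq> L2 \<Longrightarrow> SS L1 \<inter> SS L2 = {}"
proof -
  assume as: "L1 < a" "L2 < a" "L1 \<noteq> L2"
  have "x \<notin> SS L1 \<or> x \<notin> SS L2" for x
  proof (rule ccontr)
    assume "\<not> (x \<notin> SS L1 \<or> x \<notin> SS L2)"
    then have "x mod a = ww L1 mod a" "x mod a = ww L2 mod a" unfolding SS_def by auto
    then have "L1 * d mod a = L2 * d mod a" using ww_mod[of L1] ww_mod[of L2] by simp
    then have "L1 mod a = L2 mod a" by (rule cancel)
    then show False using as by simp
  qed
  then show ?thesis by blast
qed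

lemma SS_card: "card (SS L) = ww L div a"
  unfolding SS_def using card_res[OF apos] by blast

lemma SS_fin: "finite (SS L)"
  unfolding SS_def by simp

lemma card_NR: "card (NR AA) = (\<Sum>L<a. ww L div a)"
  unfolding NR_eq
  by (subst card_UN_disjoint) (auto simp: SS_fin SS_card SS_disj)

lemma fin_NR: "finite (NR AA)"
  unfolding NR_eq by (simp add: SS_fin)


lemma mod_gap: "x < N \<Longrightarrow> x mod a = N mod a \<Longrightarrow> x + a \<le> N"
proof -
  assume xN: "x < N" and m: "x mod a = N mod a"
  have "N mod a = x mod a" using m by simp
  then have "a dvd N - x" using mod_eq_dvd_iff_nat[of x N a] xN by simp
  moreover have "0 < N - x" using xN by simp
  ultimately have "a \<le> N - x" by (rule dvd_imp_le)
  then show ?thesis using xN by simp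
qed

lemma mm_pos: "1 \<le> L \<Longrightarrow> 1 \<le> mm k L"
proof -
  assume "1 \<le> L"
  then have "1 \<le> (2*k+1) * qq k L" using qq_ge[of L k] by simp
  then have "1 \<le> qq k L" by (cases "qq k L") auto
  then show ?thesis unfolding mm_def by simp
qed

lemma max_NR:
  assumes h: "h \<ge> 1" and all: "\<forall>L<a. ww L \<le> W0" and L0: "1 \<le> L0" "L0 < a" "ww L0 = W0"
  shows "Max (NR AA) = W0 - a"
proof (rule Max_eqI)
  show "finite (NR AA)" by (rule fin_NR)
next
  fix y assume "y \<in> NR AA"
  then obtain L where L: "L < a" "y \<in> SS L" unfolding NR_eq by blast
  then have "y + a \<le> ww L" using mod_gap unfolding SS_def by simp
  moreover have "ww L \<le> W0" using all L(1) by simp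
  ultimately show "y \<le> W0 - a" by simp
next
  have m1: "1 \<le> mm k L0" using mm_pos L0(1) .
  have "1 * 1 * a \<le> mm k L0 * h * a" using m1 h by (intro mult_le_mono) simp_all
  then have "a \<le> mm k L0 * h * a" by (simp only: mult_1)
  then have ge: "a \<le> ww L0" by linarith
  have "(ww L0 - a) mod a = ww L0 mod a" by (rule le_mod_geq[OF ge, symmetric])
  moreover have "ww L0 - a < ww L0" using ge apos by simp
  ultimately have "ww L0 - a \<in> SS L0" unfolding SS_def by simp
  then show "W0 - a \<in> NR AA" unfolding NR_eq using L0 by auto
qed

end



definition GG :: "nat \<Rightarrow> nat \<Rightarrow> nat \<Rightarrow> nat" where
  "GG k b r = (2*k+1)*b*(b+1) + 2*k*b + 2*r*(b+1) + 2*(r div 2)"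

lemma msum_step:
  assumes "r < 2*k+1"
  shows "(\<Sum>j<(2*k+1)*b + Suc r. mm k (Suc j)) = (\<Sum>j<(2*k+1)*b + r. mm k (Suc j)) + (if even r then b+1 else b+2)"
proof -
  have "(\<Sum>j<(2*k+1)*b + Suc r. mm k (Suc j)) = (\<Sum>j<Suc ((2*k+1)*b + r). mm k (Suc j))"
    by (simp only: add_Suc_right)
  also have "\<dots> = (\<Sum>j<(2*k+1)*b + r. mm k (Suc j)) + mm k (Suc ((2*k+1)*b + r))"
    by (rule sum.lessThan_Suc)
  also have "mm k (Suc ((2*k+1)*b + r)) = mm k ((2*k+1)*b + (r+1))" by simp
  also have "\<dots> = (if odd (r+1) then b+1 else b+2)" using assms by (intro mm_block) simp_all
  also have "(if odd (r+1) then b+1 else b+2) = (if even r then b+1 else b+2)" by simp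
  finally show ?thesis .
qed

lemma GG_step: "GG k b (Suc r) = GG k b r + 2*(if even r then b+1 else b+2)"
proof (cases "even r")
  case True
  then obtain i where "r = 2*i" by blast
  then show ?thesis unfolding GG_def by (simp add: algebra_simps)
next
  case False
  then obtain i where "r = 2*i+1" using oddE by blast
  then show ?thesis unfolding GG_def by (simp add: algebra_simps)
qed

lemma msum_r:
  assumes base: "2*(\<Sum>j<(2*k+1)*b. mm k (Suc j)) = GG k b 0"
  shows "r \<le> 2*k+1 \<Longrightarrow> 2*(\<Sum>j<(2*k+1)*b + r. mm k (Suc j)) = GG k b r"
proof (induction r)
  case 0
  then show ?case using base by simp
next
  case (Suc r)
  then have r: "r < 2*k+1" by simp
  have "2*(\<Sum>j<(2*k+1)*b + Suc r. mm k (Suc j)) = 2*(\<Sum>j<(2*k+1)*b + r. mm k (Suc j)) + 2*(if even r then b+1 else b+2)"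
    using msum_step[OF r, of b] by simp
  also have "\<dots> = GG k b r + 2*(if even r then b+1 else b+2)" using Suc r by simp
  also have "\<dots> = GG k b (Suc r)" by (simp add: GG_step)
  finally show ?case .
qed

lemma GG_wrap: "GG k b (2*k+1) = GG k (Suc b) 0"
proof -
  have "(2*k+1) div 2 = k" by simp
  then show ?thesis unfolding GG_def by (simp add: algebra_simps)
qed

lemma msum: "r \<le> 2*k+1 \<Longrightarrow> 2*(\<Sum>j<(2*k+1)*b + r. mm k (Suc j)) = GG k b r"
proof (induction b arbitrary: r)
  case 0
  show ?case by (rule msum_r[OF _ 0]) (simp add: GG_def)
next
  case (Suc b)
  have "2*(\<Sum>j<(2*k+1)*b + (2*k+1). mm k (Suc j)) = GG k b (2*k+1)" by (rule Suc.IH) (rule order_refl)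
  moreover have "(2*k+1)*Suc b = (2*k+1)*b + (2*k+1)" by simp
  ultimately have "2*(\<Sum>j<(2*k+1)*Suc b. mm k (Suc j)) = GG k (Suc b) 0"
    by (simp only: GG_wrap)
  then show ?case by (rule msum_r[OF _ Suc.prems])
qed

lemma gauss2: "2*(\<Sum>L<n. L) = n*(n-1)" for n :: nat
proof (induction n)
  case 0 then show ?case by simp
next
  case (Suc n) then show ?case by (cases n) (simp_all add: algebra_simps)
qed

lemma floor_sum:
  fixes a d k :: nat
  assumes cop: "coprime a d" and aK: "2*k+2 \<le> a"
  shows "a * (2*(\<Sum>L<a. L*d div a)) + a*(a-1) = d*(a*(a-1))"
proof -
  have "(\<Sum>L<a. L*d) = (\<Sum>L<a. a*(L*d div a) + L*d mod a)"
    by (rule sum.cong) (simp_all add: mult_div_mod_eq)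
  also have "\<dots> = (\<Sum>L<a. a*(L*d div a)) + (\<Sum>L<a. L*d mod a)"
    by (rule sum.distrib)
  also have "(\<Sum>L<a. a*(L*d div a)) = a*(\<Sum>L<a. L*d div a)"
    by (rule sum_distrib_left[symmetric])
  also have "(\<Sum>L<a. L*d mod a) = (\<Sum>r<a. r)"
    using sum.reindex_bij_betw[OF bij_res[OF cop aK], of "\<lambda>r. r"] by simp
  finally have e: "(\<Sum>L<a. L*d) = a*(\<Sum>L<a. L*d div a) + (\<Sum>r<a. r)" .
  have "(\<Sum>L<a. L*d) = (\<Sum>L<a. L)*d" by (simp add: sum_distrib_right)
  then have "2*(\<Sum>L<a. L*d) = d*(a*(a-1))" using gauss2[of a] by (simp add: algebra_simps)
  then show ?thesis using e gauss2[of a] by (simp add: algebra_simps)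
qed



lemma mm_low: "L \<le> (2*k+1)*s \<Longrightarrow> mm k L \<le> s+1"
  using qq_min[of L k s] mm_le[of k L] by simp

lemma mm_upper:
  assumes "L \<le> (2*k+1)*s + t" "t \<le> 2*k+1"
  shows "mm k L \<le> s+2"
proof (cases "L \<le> (2*k+1)*s")
  case True then show ?thesis using mm_low by fastforce
next
  case False
  then have "L = (2*k+1)*s + (L - (2*k+1)*s)" "1 \<le> L - (2*k+1)*s" "L - (2*k+1)*s \<le> 2*k+1"
    using assms by auto
  then show ?thesis using mm_block[of "L - (2*k+1)*s" k s] by simp
qed

lemma divh: "x < p \<Longrightarrow> (x + s*p) div p = (s::nat)"
proof -
  assume xp: "x < p"
  then have "(x + s*p) div p = s + x div p" by (intro div_mult_self1) simp
  then show ?thesis using xp by simp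
qed

lemma half_eq: "2 * m = (x::real) \<Longrightarrow> m = x / 2" by simp

lemma ww_mono:
  assumes "m \<le> M" "L \<le> L'"
  shows "m*h*a + L*d \<le> M*h*(a::nat) + L'*d"
proof -
  have "m*h*a \<le> M*h*a" using assms by (intro mult_le_mono) simp_all
  moreover have "L*d \<le> L'*d" using assms by simp
  ultimately show ?thesis by linarith
qed

theorem mainTheorem8:
  fixes a h d k s t :: nat
  assumes "gcd a d = 1"
    and "h \<ge> 1" and "d \<ge> 1" and "k \<ge> 1"
    and "a > 2"
    and "3 \<le> 2*k+1" and "2*k+1 \<le> a - 1"
    and "a - 1 = (2*k+1)*s + t" and "1 \<le> t" and "t \<le> 2*k+1"
  defines "A \<equiv> a # map (\<lambda>j. h*a + (2*j+1)*d) [0..<k+1]"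
  shows "(even t \<longrightarrow>
            int (frob_g A) = int (h*a*((a-2) div (2*k+1) + 2)) + int ((a-1)*d) - int a)
       \<and> (odd t \<longrightarrow>
            int (frob_g A) = max (int (h*a*((a-2) div (2*k+1) + 1)) + int ((a-1)*d) - int a)
                                 (int (h*a*((a-3) div (2*k+1) + 2)) + int ((a-2)*d) - int a))
       \<and> real (frob_n A) = real h * real s * (real k * real s + real t + real s / 2 - 1/2)
            + real (a-1) * (real d / 2 + real h - 1/2) + real h * real (t div 2)"
proof -
  note as = assms
  have cop: "coprime a d" using as(1) by (simp add: coprime_iff_gcd_eq_1)
  have aK: "2*k+2 \<le> a" using as(7) by simp
  have apos: "0 < a" using aK by simp
  have hh: "h \<ge> 1" by (rule as(2))
  have st: "a - 1 = (2*k+1)*s + t" by (rule as(8))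
  have a2: "(a-2) div (2*k+1) = s"
  proof -
    have e: "a - 2 = (t - 1) + s*(2*k+1)" using st as(9) by (simp add: algebra_simps)
    have l: "t - 1 < 2*k+1" using as(10) by simp
    show ?thesis unfolding e by (rule divh[OF l])
  qed
  have mA: "mm k (a-1) = (if odd t then s+1 else s+2)"
    using st mm_block[of t k s] as(9,10) by simp
  have nA: "frob_n A = (\<Sum>L<a. (mm k L * h * a + L * d) div a)"
    unfolding A_def frob_n_def using card_NR[OF cop aK] .
  have dv: "(mm k L * h * a + L * d) div a = mm k L * h + L * d div a" for L
  proof -
    have "mm k L * h * a + L * d = L * d + (mm k L * h) * a" by simp
    then show ?thesis using apos by simp
  qed
  have "frob_n A = (\<Sum>L<a. mm k L * h + L * d div a)" unfolding nA dv ..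
  also have "\<dots> = (\<Sum>L<a. mm k L) * h + (\<Sum>L<a. L * d div a)"
    by (simp add: sum.distrib sum_distrib_right)
  finally have n1: "frob_n A = (\<Sum>L<a. mm k L) * h + (\<Sum>L<a. L * d div a)" .
  have "(\<Sum>L<a. mm k L) = (\<Sum>L<Suc (a-1). mm k L)" using apos by simp
  also have "\<dots> = mm k 0 + (\<Sum>j<a-1. mm k (Suc j))" by (rule sum.lessThan_Suc_shift)
  finally have ms: "(\<Sum>L<a. mm k L) = (\<Sum>j<a-1. mm k (Suc j))" by (simp add: mm_0)
  have m2: "2 * (\<Sum>L<a. mm k L) = GG k s t" unfolding ms st using msum[OF as(10)] .
  have fs: "a * (2*(\<Sum>L<a. L*d div a)) + a*(a-1) = d*(a*(a-1))" by (rule floor_sum[OF cop aK])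
  define M where "M = (\<Sum>L<a. mm k L)"
  define Sf where "Sf = (\<Sum>L<a. L*d div a)"
  have "real (2*M) = real (GG k s t)" using m2 M_def by simp
  then have rM: "2 * real M = (2*real k+1)*real s*(real s+1) + 2*real k*real s + 2*real t*(real s+1) + 2*real (t div 2)"
    unfolding GG_def by (simp add: algebra_simps)
  have rF: "real a * (2 * real Sf) + real a * real (a-1) = real d * (real a * real (a-1))"
  proof -
    have "real (a * (2*Sf) + a*(a-1)) = real (d*(a*(a-1)))" using fs Sf_def by simp
    then show ?thesis by (simp only: of_nat_add of_nat_mult of_nat_numeral)
  qed
  have rF2: "2 * real Sf = real d * real (a-1) - real (a-1)"
  proof -
    have "real a * (2 * real Sf - (real d * real (a-1) - real (a-1))) = 0"
      using rF by (simp add: algebra_simps)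
    then show ?thesis using apos by simp
  qed
  have ra: "real (a-1) = (2*real k+1)*real s + real t" using st by (simp add: algebra_simps)
  have nfin: "real (frob_n A) = real h * real M + real Sf"
    using n1 unfolding M_def Sf_def by simp
  have npart: "real (frob_n A) = real h * real s * (real k * real s + real t + real s / 2 - 1/2)
            + real (a-1) * (real d / 2 + real h - 1/2) + real h * real (t div 2)"
  proof -
    have M': "real M = ((2*real k+1)*real s*(real s+1) + 2*real k*real s + 2*real t*(real s+1) + 2*real (t div 2))/2"
      using half_eq[OF rM] .
    have S': "real Sf = (real d * real (a-1) - real (a-1))/2" using half_eq[OF rF2] .
    show ?thesis unfolding nfin M' S' ra by (simp add: field_simps)
  qed
  have ga: "frob_g A = Max (NR (a # map (\<lambda>j. h*a + (2*j+1)*d) [0..<k+1]))"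
    unfolding A_def frob_g_def ..
  have a1: "1 \<le> a - 1" using aK by simp
  have Lsplit: "L \<le> (2*k+1)*s \<or> (L = (2*k+1)*s + (L - (2*k+1)*s) \<and> 1 \<le> L - (2*k+1)*s \<and> L - (2*k+1)*s \<le> t)"
    if "L < a" for L using that st by auto
  have even_part: "even t \<longrightarrow>
            int (frob_g A) = int (h*a*((a-2) div (2*k+1) + 2)) + int ((a-1)*d) - int a"
  proof
    assume te: "even t"
    define W0 where "W0 = (s+2)*h*a + (a-1)*d"
    have all: "\<forall>L<a. mm k L * h * a + L * d \<le> W0"
    proof (intro allI impI)
      fix L assume L: "L < a"
      have "mm k L \<le> s+2" using mm_upper[of L k s t] L st as(10) by simp
      moreover have "L \<le> a-1" using L by simp
      ultimately show "mm k L * h * a + L * d \<le> W0" unfolding W0_def by (rule ww_mono)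
    qed
    have att: "mm k (a-1) * h * a + (a-1) * d = W0" using mA te unfolding W0_def by simp
    have "Max (NR (a # map (\<lambda>j. h*a + (2*j+1)*d) [0..<k+1])) = W0 - a"
      by (rule max_NR[OF cop aK hh all a1 _ att]) (use apos in simp)
    then have fg: "frob_g A = W0 - a" using ga by simp
    have "1*1*a \<le> (s+2)*h*a" using hh by (intro mult_le_mono) simp_all
    then have "a \<le> W0" unfolding W0_def by linarith
    then show "int (frob_g A) = int (h*a*((a-2) div (2*k+1) + 2)) + int ((a-1)*d) - int a"
      unfolding fg a2 W0_def by (simp add: of_nat_diff algebra_simps)
  qed
  have odd_part: "odd t \<longrightarrow>
            int (frob_g A) = max (int (h*a*((a-2) div (2*k+1) + 1)) + int ((a-1)*d) - int a)
                                 (int (h*a*((a-3) div (2*k+1) + 2)) + int ((a-2)*d) - int a)"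
  proof
    assume to: "odd t"
    define W1 where "W1 = (s+1)*h*a + (a-1)*d"
    define W2 where "W2 = ((a-3) div (2*k+1) + 2)*h*a + (a-2)*d"
    have w1: "mm k (a-1) * h * a + (a-1) * d = W1" using mA to unfolding W1_def by simp
    have all: "\<forall>L<a. mm k L * h * a + L * d \<le> max W1 W2"
    proof (intro allI impI)
      fix L assume L: "L < a"
      show "mm k L * h * a + L * d \<le> max W1 W2"
      proof (cases "L \<le> (2*k+1)*s")
        case True
        then have "mm k L \<le> s+1" by (rule mm_low)
        moreover have "L \<le> a-1" using L by simp
        ultimately have "mm k L * h * a + L * d \<le> W1" unfolding W1_def by (rule ww_mono)
        then show ?thesis by simp
      next
        case False
        define r where "r = L - (2*k+1)*s"
        have r: "L = (2*k+1)*s + r" "1 \<le> r" "r \<le> t" using False L st unfolding r_def by auto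
        have mr: "mm k L = (if odd r then s+1 else s+2)"
          using r mm_block[of r k s] as(10) by simp
        show ?thesis
        proof (cases "odd r")
          case True
          then have "mm k L \<le> s+1" using mr by simp
          moreover have "L \<le> a-1" using L by simp
          ultimately have "mm k L * h * a + L * d \<le> W1" unfolding W1_def by (rule ww_mono)
          then show ?thesis by simp
        next
          case False
          then have "r \<noteq> t" using to by auto
          then have rt: "r + 1 \<le> t" using r by simp
          then have t2: "2 \<le> t" using r by simp
          have a3: "(a-3) div (2*k+1) = s"
          proof -
            have e: "a - 3 = (t - 2) + s*(2*k+1)" using st t2 by (simp add: algebra_simps)
            have l: "t - 2 < 2*k+1" using as(10) by simp
            show ?thesis unfolding e by (rule divh[OF l])
          qed
          have "mm k L \<le> (a-3) div (2*k+1) + 2" using mr False a3 by simp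
          moreover have "L \<le> a-2" using r rt st by simp
          ultimately have "mm k L * h * a + L * d \<le> W2" unfolding W2_def by (rule ww_mono)
          then show ?thesis by simp
        qed
      qed
    qed
    have att: "\<exists>L0. 1 \<le> L0 \<and> L0 < a \<and> mm k L0 * h * a + L0 * d = max W1 W2"
    proof (cases "t = 1")
      case True
      then have e: "s * (2*k+1) = a - 2" using st by (simp add: algebra_simps)
      then have "(a-3) < s * (2*k+1)" using as(5) by linarith
      then have "(a-3) div (2*k+1) < s" using div_less_iff_less_mult[of "2*k+1" "a-3" s] by simp
      then have "(a-3) div (2*k+1) + 2 \<le> s+1" by simp
      moreover have "a - 2 \<le> a - 1" by simp
      ultimately have "W2 \<le> W1" unfolding W1_def W2_def by (rule ww_mono)
      then have "max W1 W2 = W1" by simp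
      then show ?thesis using w1 a1 apos by (intro exI[of _ "a-1"]) simp
    next
      case False
      then have t3: "3 \<le> t" using to as(9) by presburger
      have a3: "(a-3) div (2*k+1) = s"
      proof -
        have e: "a - 3 = (t - 2) + s*(2*k+1)" using st t3 by (simp add: algebra_simps)
        have l: "t - 2 < 2*k+1" using as(10) by simp
        show ?thesis unfolding e by (rule divh[OF l])
      qed
      have "a - 2 = (2*k+1)*s + (t - 1)" using st t3 by simp
      then have "mm k (a-2) = (if odd (t-1) then s+1 else s+2)"
        using mm_block[of "t-1" k s] t3 as(10) by simp
      then have "mm k (a-2) = s+2" using to t3 by simp
      then have w2: "mm k (a-2) * h * a + (a-2) * d = W2" unfolding W2_def a3 by simp
      have "1 \<le> a - 2" "a - 2 < a" using aK as(4) by simp_all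
      note b2 = this
      show ?thesis
      proof (cases "W1 \<le> W2")
        case True
        then have "max W1 W2 = W2" by simp
        then show ?thesis using w2 b2 by (intro exI[of _ "a-2"]) simp
      next
        case False
        then have "max W1 W2 = W1" by simp
        then show ?thesis using w1 a1 apos by (intro exI[of _ "a-1"]) simp
      qed
    qed
    then obtain L0 where L0: "1 \<le> L0" "L0 < a" "mm k L0 * h * a + L0 * d = max W1 W2" by blast
    have "Max (NR (a # map (\<lambda>j. h*a + (2*j+1)*d) [0..<k+1])) = max W1 W2 - a"
      by (rule max_NR[OF cop aK hh all L0])
    then have fg: "frob_g A = max W1 W2 - a" using ga by simp
    have "1*1*a \<le> (s+1)*h*a" using hh by (intro mult_le_mono) simp_all
    then have aW1: "a \<le> W1" unfolding W1_def by linarith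
    have "1*1*a \<le> ((a-3) div (2*k+1) + 2)*h*a" using hh by (intro mult_le_mono) simp_all
    then have aW2: "a \<le> W2" unfolding W2_def by linarith
    have "int (max W1 W2 - a) = max (int W1 - int a) (int W2 - int a)"
      using aW1 aW2 by (simp add: max_def of_nat_diff)
    moreover have "int W1 = int (h*a*((a-2) div (2*k+1) + 1)) + int ((a-1)*d)"
      unfolding W1_def a2 by (simp add: algebra_simps)
    moreover have "int W2 = int (h*a*((a-3) div (2*k+1) + 2)) + int ((a-2)*d)"
      unfolding W2_def by (simp add: algebra_simps)
    ultimately show "int (frob_g A) = max (int (h*a*((a-2) div (2*k+1) + 1)) + int ((a-1)*d) - int a)
                                 (int (h*a*((a-3) div (2*k+1) + 2)) + int ((a-2)*d) - int a)"
      unfolding fg by simp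
  qed
  show ?thesis using even_part odd_part npart by blast
qed

end
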